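(* Let $L$ be a label set containing $a$, and let $\mathcal{D}$ be the category of finite rooted $L$-labeled transition systems with root-preserving, label-preserving homomorphisms. Call a sieve $S$ on an object $G$ naive-sim-covering if for every finite rooted $L$-labeled tree $T$ admitting a homomorphism $T\to G$, some homomorphism $T\to G$ belongs to $S$. Then this covering predicate satisfies the maximality and transitivity axioms of a Grothendieck topology but not the stability (pullback) axiom. Explicitly: let $\mathrm{traceLTS}[a]$ have vertices $0$ (root) and $1$ with edge $0\xrightarrow{a}1$; let $\mathrm{fanLTS}[a,a]$ have vertices $0$ (root), $1$, $2$ with edges $0\xrightarrow{a}1$ and $0\xrightarrow{a}2$; let $f_R,f_L:\mathrm{traceLTS}[a]\to\mathrm{fanLTS}[a,a]$ send $1$ to $2$ and to $1$ respectively. The sieve $S$ on $\mathrm{fanLTS}[a,a]$ generated by $f_R$ is naive-sim-covering, while its pullback $f_L^*(S)$ on $\mathrm{traceLTS}[a]$ is not naive-sim-covering.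
   Context: A sieve on $G$ is a set of morphisms with codomain $G$ closed under precomposition; the pullback $f^*(S)$ along $f:H\to G$ is $\{g : f\circ g\in S\}$. The Grothendieck topology axioms: the maximal sieve covers (maximality); covering sieves are stable under pullback (stability); and if $S$ covers and $R$ is a sieve such that $f^*(R)$ covers for every $f\in S$ then $R$ covers (transitivity). *)

theory Defs
  imports Main "HOL-Library.FuncSet"
begin

text \<open>Finite rooted labelled transition systems. States are natural numbers
(every finite LTS is isomorphic to one of these, so this is a skeleton-like
presentation of the category D).\<close>

record 'l lts =
  verts :: "nat set"
  root  :: nat
  edges :: "(nat \<times> 'l \<times> nat) set"

definition wf_lts :: "'l set \<Rightarrow> 'l lts \<Rightarrow> bool" where
  "wf_lts L G \<longleftrightarrow> finite (verts G) \<and> finite (edges G) \<and> root G \<in> verts G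
     \<and> edges G \<subseteq> verts G \<times> L \<times> verts G"

type_synonym 'l mor = "'l lts \<times> 'l lts \<times> (nat \<Rightarrow> nat)"

definition mdom :: "'l mor \<Rightarrow> 'l lts" where "mdom m = fst m"
definition mcod :: "'l mor \<Rightarrow> 'l lts" where "mcod m = fst (snd m)"
definition mfun :: "'l mor \<Rightarrow> nat \<Rightarrow> nat" where "mfun m = snd (snd m)"

definition is_hom :: "'l set \<Rightarrow> 'l mor \<Rightarrow> bool" where
  "is_hom L m \<longleftrightarrow> wf_lts L (mdom m) \<and> wf_lts L (mcod m)
     \<and> mfun m \<in> verts (mdom m) \<rightarrow>\<^sub>E verts (mcod m)
     \<and> mfun m (root (mdom m)) = root (mcod m)
     \<and> (\<forall>u l v. (u, l, v) \<in> edges (mdom m) \<longrightarrow> (mfun m u, l, mfun m v) \<in> edges (mcod m))"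

text \<open>Composition comp g f = g o f (meaningful when mcod f = mdom g).\<close>
definition comp :: "'l mor \<Rightarrow> 'l mor \<Rightarrow> 'l mor" where
  "comp g f = (mdom f, mcod g, restrict (mfun g \<circ> mfun f) (verts (mdom f)))"

definition sieve :: "'l set \<Rightarrow> 'l mor set \<Rightarrow> 'l lts \<Rightarrow> bool" where
  "sieve L S G \<longleftrightarrow> wf_lts L G \<and> (\<forall>m\<in>S. is_hom L m \<and> mcod m = G)
     \<and> (\<forall>m\<in>S. \<forall>g. is_hom L g \<and> mcod g = mdom m \<longrightarrow> comp m g \<in> S)"

definition max_sieve :: "'l set \<Rightarrow> 'l lts \<Rightarrow> 'l mor set" where
  "max_sieve L G = {m. is_hom L m \<and> mcod m = G}"

definition pullback :: "'l set \<Rightarrow> 'l mor \<Rightarrow> 'l mor set \<Rightarrow> 'l mor set" where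
  "pullback L f S = {g. is_hom L g \<and> mcod g = mdom f \<and> comp f g \<in> S}"

definition gen_sieve :: "'l set \<Rightarrow> 'l mor \<Rightarrow> 'l mor set" where
  "gen_sieve L f = {comp f g | g. is_hom L g \<and> mcod g = mdom f}"

definition is_tree :: "'l set \<Rightarrow> 'l lts \<Rightarrow> bool" where
  "is_tree L T \<longleftrightarrow> wf_lts L T
     \<and> (\<forall>v\<in>verts T. (root T, v) \<in> {(u, w). \<exists>l. (u, l, w) \<in> edges T}\<^sup>*)
     \<and> (\<forall>u l. (u, l, root T) \<notin> edges T)
     \<and> (\<forall>v\<in>verts T. v \<noteq> root T \<longrightarrow> (\<exists>!e. e \<in> edges T \<and> snd (snd e) = v))"

definition naive_covers :: "'l set \<Rightarrow> 'l mor set \<Rightarrow> 'l lts \<Rightarrow> bool" where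
  "naive_covers L S G \<longleftrightarrow>
     (\<forall>T. is_tree L T \<longrightarrow> (\<exists>h. is_hom L (T, G, h)) \<longrightarrow> (\<exists>h. (T, G, h) \<in> S))"

definition traceLTS :: "'l \<Rightarrow> 'l lts" where
  "traceLTS a = \<lparr>verts = {0, 1}, root = 0, edges = {(0, a, 1)}\<rparr>"

definition fanLTS :: "'l \<Rightarrow> 'l lts" where
  "fanLTS a = \<lparr>verts = {0, 1, 2}, root = 0, edges = {(0, a, 1), (0, a, 2)}\<rparr>"

definition fR :: "'l \<Rightarrow> 'l mor" where
  "fR a = (traceLTS a, fanLTS a, restrict (\<lambda>x. if x = 1 then 2 else 0) {0, 1})"

definition fL :: "'l \<Rightarrow> 'l mor" where
  "fL a = (traceLTS a, fanLTS a, restrict (\<lambda>x. if x = 1 then 1 else 0) {0, 1})"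

end

theory Submission
  imports Defs
begin

lemma wf_trace: "a \<in> L \<Longrightarrow> wf_lts L (traceLTS a)"
  by (auto simp: wf_lts_def traceLTS_def)

lemma wf_fan: "a \<in> L \<Longrightarrow> wf_lts L (fanLTS a)"
  by (auto simp: wf_lts_def fanLTS_def)

lemma hom_fR: "a \<in> L \<Longrightarrow> is_hom L (fR a)"
  using wf_trace[of a L] wf_fan[of a L]
  by (auto simp: is_hom_def fR_def mdom_def mcod_def mfun_def traceLTS_def fanLTS_def)

lemma hom_fL: "a \<in> L \<Longrightarrow> is_hom L (fL a)"
  using wf_trace[of a L] wf_fan[of a L]
  by (auto simp: is_hom_def fL_def mdom_def mcod_def mfun_def traceLTS_def fanLTS_def)

lemma comp_parts[simp]:
  "mdom (comp g f) = mdom f" "mcod (comp g f) = mcod g"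
  "mfun (comp g f) = restrict (mfun g \<circ> mfun f) (verts (mdom f))"
  by (auto simp: comp_def mdom_def mcod_def mfun_def)

lemma hom_comp:
  assumes f: "is_hom L f" and g: "is_hom L g" and c: "mcod g = mdom f"
  shows "is_hom L (comp f g)"
proof -
  have wg: "wf_lts L (mdom g)" and wf: "wf_lts L (mcod f)"
    and gv: "\<And>x. x \<in> verts (mdom g) \<Longrightarrow> mfun g x \<in> verts (mdom f)"
    and fv: "\<And>x. x \<in> verts (mdom f) \<Longrightarrow> mfun f x \<in> verts (mcod f)"
    and gr: "mfun g (root (mdom g)) = root (mdom f)"
    and fr: "mfun f (root (mdom f)) = root (mcod f)"
    and ge: "\<And>u l v. (u, l, v) \<in> edges (mdom g) \<Longrightarrow> (mfun g u, l, mfun g v) \<in> edges (mdom f)"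
    and fe: "\<And>u l v. (u, l, v) \<in> edges (mdom f) \<Longrightarrow> (mfun f u, l, mfun f v) \<in> edges (mcod f)"
    using f g c unfolding is_hom_def by (auto simp: PiE_iff)
  have rg: "root (mdom g) \<in> verts (mdom g)" using wg by (simp add: wf_lts_def)
  have A: "restrict (mfun f \<circ> mfun g) (verts (mdom g)) \<in> verts (mdom g) \<rightarrow>\<^sub>E verts (mcod f)"
      using gv fv by auto
  have B: "restrict (mfun f \<circ> mfun g) (verts (mdom g)) (root (mdom g)) = root (mcod f)"
      using rg gr fr by simp
  have C: "\<forall>u l v. (u, l, v) \<in> edges (mdom g) \<longrightarrow> (restrict (mfun f \<circ> mfun g) (verts (mdom g)) u, l,
                restrict (mfun f \<circ> mfun g) (verts (mdom g)) v) \<in> edges (mcod f)"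
  proof (intro allI impI)
    fix u l v assume e: "(u, l, v) \<in> edges (mdom g)"
    then have "u \<in> verts (mdom g)" "v \<in> verts (mdom g)" using wg by (auto simp: wf_lts_def)
    then show "(restrict (mfun f \<circ> mfun g) (verts (mdom g)) u, l,
                restrict (mfun f \<circ> mfun g) (verts (mdom g)) v) \<in> edges (mcod f)"
      using fe[OF ge[OF e]] by simp
  qed
  show ?thesis unfolding is_hom_def comp_parts using wg wf A B C by blast
qed

lemma comp_assoc:
  assumes "is_hom L g" "mcod g' = mdom g" "is_hom L g'"
  shows "comp (comp f g) g' = comp f (comp g g')"
proof -
  have "\<And>x. x \<in> verts (mdom g') \<Longrightarrow> mfun g' x \<in> verts (mdom g)"
    using assms(2,3) by (auto simp: is_hom_def PiE_iff)
  then show ?thesis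
    by (auto simp: comp_def mdom_def mcod_def mfun_def restrict_def fun_eq_iff)
qed

lemma hom_id: "wf_lts L T \<Longrightarrow> is_hom L (T, T, restrict id (verts T))"
  by (auto simp: is_hom_def mdom_def mcod_def mfun_def wf_lts_def)

theorem mainTheorem17:
  fixes L :: "'l set" and a :: 'l
  assumes "a \<in> L"
  shows "(\<forall>G. wf_lts L G \<longrightarrow> naive_covers L (max_sieve L G) G)
     \<and> (\<forall>G S R. sieve L S G \<longrightarrow> naive_covers L S G \<longrightarrow> sieve L R G
          \<longrightarrow> (\<forall>f\<in>S. naive_covers L (pullback L f R) (mdom f))
          \<longrightarrow> naive_covers L R G)
     \<and> \<not> (\<forall>G S f. sieve L S G \<longrightarrow> naive_covers L S G \<longrightarrow> is_hom L f \<longrightarrow> mcod f = G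
          \<longrightarrow> naive_covers L (pullback L f S) (mdom f))
     \<and> is_hom L (fR a) \<and> is_hom L (fL a)
     \<and> sieve L (gen_sieve L (fR a)) (fanLTS a)
     \<and> naive_covers L (gen_sieve L (fR a)) (fanLTS a)
     \<and> \<not> naive_covers L (pullback L (fL a) (gen_sieve L (fR a))) (traceLTS a)"
proof -
  have P1: "\<forall>G. wf_lts L G \<longrightarrow> naive_covers L (max_sieve L G) G"
    by (auto simp: naive_covers_def max_sieve_def mcod_def)
  have P2: "\<forall>G S R. sieve L S G \<longrightarrow> naive_covers L S G \<longrightarrow> sieve L R G
          \<longrightarrow> (\<forall>f\<in>S. naive_covers L (pullback L f R) (mdom f))
          \<longrightarrow> naive_covers L R G"
  proof (intro allI impI)
    fix G S R
    assume S: "sieve L S G" and SC: "naive_covers L S G" and R: "sieve L R G"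
      and PB: "\<forall>f\<in>S. naive_covers L (pullback L f R) (mdom f)"
    show "naive_covers L R G" unfolding naive_covers_def
    proof (intro allI impI)
      fix T assume T: "is_tree L T" and "\<exists>h. is_hom L (T, G, h)"
      then obtain h where hS: "(T, G, h) \<in> S" using SC by (auto simp: naive_covers_def)
      have wT: "wf_lts L T" using T by (simp add: is_tree_def)
      have "naive_covers L (pullback L (T, G, h) R) T" using PB[rule_format, OF hS] by (simp add: mdom_def)
      then obtain g where "(T, T, g) \<in> pullback L (T, G, h) R"
        using T hom_id[OF wT] unfolding naive_covers_def by blast
      then have "comp (T, G, h) (T, T, g) \<in> R" by (simp add: pullback_def)
      then show "\<exists>h. (T, G, h) \<in> R" by (auto simp: comp_def mdom_def mcod_def)
    qed
  qed
  have hR: "is_hom L (fR a)" and hL: "is_hom L (fL a)" using hom_fR[OF assms] hom_fL[OF assms] .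
  have SV: "sieve L (gen_sieve L (fR a)) (fanLTS a)"
    unfolding sieve_def
  proof (intro conjI ballI allI impI)
    show "wf_lts L (fanLTS a)" using wf_fan assms .
  next
    fix m assume "m \<in> gen_sieve L (fR a)"
    then obtain g where g: "is_hom L g" "mcod g = mdom (fR a)" "m = comp (fR a) g"
      by (auto simp: gen_sieve_def)
    have "mcod (fR a) = fanLTS a" by (simp add: fR_def mcod_def)
    then show "is_hom L m" "mcod m = fanLTS a"
      using g hom_comp[OF hR g(1,2)] by simp_all
  next
    fix m g' assume "m \<in> gen_sieve L (fR a)" and g': "is_hom L g' \<and> mcod g' = mdom m"
    then obtain g where g: "is_hom L g" "mcod g = mdom (fR a)" "m = comp (fR a) g"
      by (auto simp: gen_sieve_def)
    have "comp m g' = comp (fR a) (comp g g')"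
      using comp_assoc[OF g(1)] g g' by simp
    moreover have "is_hom L (comp g g')" using hom_comp[OF g(1)] g' g(3) by simp
    moreover have "mcod (comp g g') = mdom (fR a)" using g by simp
    ultimately show "comp m g' \<in> gen_sieve L (fR a)" unfolding gen_sieve_def mem_Collect_eq by (metis comp_parts(2))
  qed
  have NC: "naive_covers L (gen_sieve L (fR a)) (fanLTS a)"
    unfolding naive_covers_def
  proof (intro allI impI)
    fix T assume T: "is_tree L T" and "\<exists>h. is_hom L (T, fanLTS a, h)"
    then obtain h where h: "is_hom L (T, fanLTS a, h)" by blast
    define g where "g = restrict (\<lambda>v. if h v = 0 then 0 else (1::nat)) (verts T)"
    have wT: "wf_lts L T" using T by (simp add: is_tree_def)
    have "is_hom L (T, traceLTS a, g)"
      unfolding is_hom_def mdom_def mcod_def mfun_def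
    proof (simp, intro conjI allI impI)
      show "wf_lts L T" by fact
      show "wf_lts L (traceLTS a)" using wf_trace assms .
      show "g \<in> verts T \<rightarrow>\<^sub>E verts (traceLTS a)" by (auto simp: g_def traceLTS_def)
      show "g (root T) = root (traceLTS a)"
        using h wT by (auto simp: g_def traceLTS_def is_hom_def mdom_def mcod_def mfun_def fanLTS_def wf_lts_def)
    next
      fix u l v assume e: "(u, l, v) \<in> edges T"
      then have "(h u, l, h v) \<in> edges (fanLTS a)" using h by (auto simp: is_hom_def mdom_def mcod_def mfun_def)
      moreover have "u \<in> verts T" "v \<in> verts T" using e wT by (auto simp: wf_lts_def)
      ultimately show "(g u, l, g v) \<in> edges (traceLTS a)"
        by (auto simp: g_def traceLTS_def fanLTS_def)
    qed
    moreover have "mcod (T, traceLTS a, g) = mdom (fR a)" by (simp add: mcod_def mdom_def fR_def)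
    ultimately have "comp (fR a) (T, traceLTS a, g) \<in> gen_sieve L (fR a)"
      by (auto simp: gen_sieve_def)
    then show "\<exists>h. (T, fanLTS a, h) \<in> gen_sieve L (fR a)"
      by (auto simp: comp_def mdom_def mcod_def fR_def)
  qed
  have hom1: "\<And>g. is_hom L ((traceLTS a), (traceLTS a), g) \<Longrightarrow> g 1 = 1"
    by (auto simp: is_hom_def mdom_def mcod_def mfun_def traceLTS_def)
  have NN: "\<not> naive_covers L (pullback L (fL a) (gen_sieve L (fR a))) (traceLTS a)"
  proof
    assume C: "naive_covers L (pullback L (fL a) (gen_sieve L (fR a))) (traceLTS a)"
    have tr: "is_tree L (traceLTS a)"
      unfolding is_tree_def using wf_trace[OF assms]
      by (auto simp: traceLTS_def intro!: r_into_rtrancl)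
    obtain h where "(traceLTS a, traceLTS a, h) \<in> pullback L (fL a) (gen_sieve L (fR a))"
      using C tr hom_id[OF wf_trace[OF assms]] unfolding naive_covers_def by blast
    then have h: "is_hom L (traceLTS a, traceLTS a, h)"
      and c: "comp (fL a) (traceLTS a, traceLTS a, h) \<in> gen_sieve L (fR a)"
      by (auto simp: pullback_def)
    from c obtain g where g: "is_hom L g" "mcod g = mdom (fR a)"
      "comp (fL a) (traceLTS a, traceLTS a, h) = comp (fR a) g"
      by (auto simp: gen_sieve_def)
    have gd: "mdom g = traceLTS a" using g(3) by (metis comp_parts(1) mdom_def fst_conv)
    obtain gf where gg: "g = (traceLTS a, traceLTS a, gf)"
      using gd g(2) by (cases g) (auto simp: mdom_def mcod_def fR_def)
    have "gf 1 = 1" using hom1 g(1) gg by simp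
    moreover have "h 1 = 1" using hom1 h by simp
    moreover have "mfun (comp (fL a) (traceLTS a, traceLTS a, h)) 1 = mfun (comp (fR a) g) 1"
      using g(3) by simp
    ultimately show False
      by (simp add: gg comp_def mfun_def mdom_def fL_def fR_def traceLTS_def)
  qed
  have P3: "\<not> (\<forall>G S f. sieve L S G \<longrightarrow> naive_covers L S G \<longrightarrow> is_hom L f \<longrightarrow> mcod f = G
          \<longrightarrow> naive_covers L (pullback L f S) (mdom f))"
    using SV NC hL NN by (metis fL_def mcod_def mdom_def fst_conv snd_conv)
  show ?thesis using P1 P2 P3 hR hL SV NC NN by blast
qed

end
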